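(* Let $p\in(1,\infty)$. A metric space has property HC$_{p,d}$ if and only if it has property HIC$_{p,d}$.
   Context: For infinite $\mathbb M\subseteq\mathbb N$ and $k\in\mathbb N$, $[\mathbb M]^k$ is the set of $\bar n=(n_1,\dots,n_k)\in\mathbb M^k$ with $n_1<\dots<n_k$, with Hamming distance $d_{\mathbb H}(\bar n,\bar m)=|\{j:n_j\ne m_j\}|$; $[\mathbb M]^\omega$ is the set of infinite subsets of $\mathbb M$; $I_k(\mathbb M)=\{(\bar n,\bar m): n_1<m_1<\dots<n_k<m_k\}$; $H_j(\mathbb M)=\{(\bar n,\bar m)\in([\mathbb M]^k)^2: n_i=m_i\ (i\ne j),\ n_j<m_j\}$. For a metric space $(M,d)$, $\lambda>0$ and Lipschitz $f:([\mathbb N]^k,d_{\mathbb H})\to M$, put $\alpha_j=\sup_{(\bar n,\bar m)\in H_j(\mathbb N)}d(f(\bar n),f(\bar m))$. $M$ has $\lambda$-HIC$_{p,d}$ if for every $k$ and every such $f$ there is $\mathbb M\in[\mathbb N]^\omega$ with $d(f(\bar n),f(\bar m))\le\lambda(\sum_{j=1}^k\alpha_j^p)^{1/p}$ for all $(\bar n,\bar m)\in I_k(\mathbb M)$. $M$ has $\lambda$-HC$_{p,d}$ if for every $k$ and every such $f$ there are $\bar n,\bar m\in[\mathbb N]^k$ with $\bar n\cap\bar m=\varnothing$ (as sets) and $d(f(\bar n),f(\bar m))\le\lambda(\sum_{j=1}^k\alpha_j^p)^{1/p}$. HIC$_{p,d}$ (resp. HC$_{p,d}$) means $\lambda$-HIC$_{p,d}$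 (resp. $\lambda$-HC$_{p,d}$) for some $\lambda>0$. *)

theory Defs
  imports "HOL-Analysis.Analysis"
begin

text \<open>Elements of [M]^k are represented as strictly increasing lists of length k
  with entries in M; the paper's index j \<in> {1..k} corresponds to list index j-1.\<close>

definition incr_tuples :: "nat set \<Rightarrow> nat \<Rightarrow> nat list set" where
  "incr_tuples M k = {xs. length xs = k \<and> sorted_wrt (<) xs \<and> set xs \<subseteq> M}"

definition hamming :: "nat list \<Rightarrow> nat list \<Rightarrow> nat" where
  "hamming xs ys = card {j. j < length xs \<and> xs ! j \<noteq> ys ! j}"

definition interlaced :: "nat set \<Rightarrow> nat \<Rightarrow> (nat list \<times> nat list) set" where
  "interlaced M k = {(xs, ys). xs \<in> incr_tuples M k \<and> ys \<in> incr_tuples M k \<and>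
     (\<forall>i<k. xs ! i < ys ! i \<and> (Suc i < k \<longrightarrow> ys ! i < xs ! Suc i))}"

definition Hpairs :: "nat set \<Rightarrow> nat \<Rightarrow> nat \<Rightarrow> (nat list \<times> nat list) set" where
  "Hpairs M k j = {(xs, ys). xs \<in> incr_tuples M k \<and> ys \<in> incr_tuples M k \<and>
     (\<forall>i<k. i \<noteq> j \<longrightarrow> xs ! i = ys ! i) \<and> xs ! j < ys ! j}"

definition hamming_lipschitz ::
  "'a set \<Rightarrow> ('a \<Rightarrow> 'a \<Rightarrow> real) \<Rightarrow> nat \<Rightarrow> (nat list \<Rightarrow> 'a) \<Rightarrow> bool" where
  "hamming_lipschitz M d k f \<longleftrightarrow>
     f ` incr_tuples UNIV k \<subseteq> M \<and>
     (\<exists>C. \<forall>xs\<in>incr_tuples UNIV k. \<forall>ys\<in>incr_tuples UNIV k.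
        d (f xs) (f ys) \<le> C * real (hamming xs ys))"

definition alpha_coef ::
  "('a \<Rightarrow> 'a \<Rightarrow> real) \<Rightarrow> nat \<Rightarrow> (nat list \<Rightarrow> 'a) \<Rightarrow> nat \<Rightarrow> real" where
  "alpha_coef d k f j = (SUP (xs, ys) \<in> Hpairs UNIV k j. d (f xs) (f ys))"

definition alpha_norm ::
  "real \<Rightarrow> ('a \<Rightarrow> 'a \<Rightarrow> real) \<Rightarrow> nat \<Rightarrow> (nat list \<Rightarrow> 'a) \<Rightarrow> real" where
  "alpha_norm p d k f = (\<Sum>j<k. alpha_coef d k f j powr p) powr (1 / p)"

definition lambda_HIC :: "real \<Rightarrow> real \<Rightarrow> 'a set \<Rightarrow> ('a \<Rightarrow> 'a \<Rightarrow> real) \<Rightarrow> bool" where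
  "lambda_HIC lam p M d \<longleftrightarrow>
     (\<forall>k f. hamming_lipschitz M d k f \<longrightarrow>
        (\<exists>N. infinite N \<and>
           (\<forall>(xs, ys) \<in> interlaced N k. d (f xs) (f ys) \<le> lam * alpha_norm p d k f)))"

definition lambda_HC :: "real \<Rightarrow> real \<Rightarrow> 'a set \<Rightarrow> ('a \<Rightarrow> 'a \<Rightarrow> real) \<Rightarrow> bool" where
  "lambda_HC lam p M d \<longleftrightarrow>
     (\<forall>k f. hamming_lipschitz M d k f \<longrightarrow>
        (\<exists>xs \<in> incr_tuples UNIV k. \<exists>ys \<in> incr_tuples UNIV k.
           set xs \<inter> set ys = {} \<and> d (f xs) (f ys) \<le> lam * alpha_norm p d k f))"

definition HIC :: "real \<Rightarrow> 'a set \<Rightarrow> ('a \<Rightarrow> 'a \<Rightarrow> real) \<Rightarrow> bool" where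
  "HIC p M d \<longleftrightarrow> (\<exists>lam>0. lambda_HIC lam p M d)"

definition HC :: "real \<Rightarrow> 'a set \<Rightarrow> ('a \<Rightarrow> 'a \<Rightarrow> real) \<Rightarrow> bool" where
  "HC p M d \<longleftrightarrow> (\<exists>lam>0. lambda_HC lam p M d)"

end

theory Submission
  imports Defs "HOL-Library.Ramsey"
begin

definition pairok :: "nat \<Rightarrow> nat list \<Rightarrow> nat list \<Rightarrow> bool" where
  "pairok k as bs \<longleftrightarrow> as \<in> incr_tuples UNIV k \<and> bs \<in> incr_tuples UNIV k \<and> set as \<inter> set bs = {}"

definition cmp :: "nat list \<Rightarrow> nat list \<Rightarrow> (nat \<times> nat) set" where
  "cmp as bs = {(i,j). i < length as \<and> j < length bs \<and> as!i < bs!j}"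

lemma incr_nth: "xs \<in> incr_tuples N k \<Longrightarrow> i < j \<Longrightarrow> j < k \<Longrightarrow> xs!i < xs!j"
  by (auto simp: incr_tuples_def sorted_wrt_iff_nth_less)

lemma incr_nth_le: "xs \<in> incr_tuples N k \<Longrightarrow> i \<le> j \<Longrightarrow> j < k \<Longrightarrow> xs!i \<le> xs!j"
  using incr_nth[of xs N k i j] by (cases "i = j") auto

lemma incr_nth_less_iff: "xs \<in> incr_tuples N k \<Longrightarrow> i < k \<Longrightarrow> j < k \<Longrightarrow> xs!i < xs!j \<longleftrightarrow> i < j"
  using incr_nth[of xs N k i j] incr_nth_le[of xs N k j i] by (cases "i < j") auto

lemma incr_distinct: "xs \<in> incr_tuples N k \<Longrightarrow> distinct xs"
  by (auto simp: incr_tuples_def strict_sorted_iff)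

lemma rank_inj:
  fixes S :: "nat set"
  assumes "finite S" "x \<in> S" "y \<in> S" "card {z\<in>S. z < x} = card {z\<in>S. z < y}"
  shows "x = y"
proof (rule ccontr)
  assume "x \<noteq> y"
  then consider "x < y" | "y < x" by linarith
  then show False
  proof cases
    case 1
    have "{z\<in>S. z < x} \<subset> {z\<in>S. z < y}" using 1 assms(2) by auto
    then have "card {z\<in>S. z < x} < card {z\<in>S. z < y}"
      by (rule psubset_card_mono[rotated]) (use assms(1) in auto)
    then show False using assms(4) by simp
  next
    case 2
    have "{z\<in>S. z < y} \<subset> {z\<in>S. z < x}" using 2 assms(3) by auto
    then have "card {z\<in>S. z < y} < card {z\<in>S. z < x}"
      by (rule psubset_card_mono[rotated]) (use assms(1) in auto)
    then show False using assms(4) by simp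
  qed
qed

lemma rank_as:
  assumes "pairok k as bs" "i < k"
  shows "card {z \<in> set as \<union> set bs. z < as!i} = i + card {j. j < k \<and> (i,j) \<notin> cmp as bs}"
proof -
  have A: "as \<in> incr_tuples UNIV k" and B: "bs \<in> incr_tuples UNIV k" and D: "set as \<inter> set bs = {}"
    using assms by (auto simp: pairok_def)
  have la: "length as = k" and lb: "length bs = k" using A B by (auto simp: incr_tuples_def)
  let ?J = "{j. j < k \<and> (i,j) \<notin> cmp as bs}"
  have eq: "{z \<in> set as \<union> set bs. z < as!i} = nth as ` {..<i} \<union> nth bs ` ?J"
  proof (intro equalityI subsetI)
    fix z assume z: "z \<in> {z \<in> set as \<union> set bs. z < as!i}"
    show "z \<in> nth as ` {..<i} \<union> nth bs ` ?J"
    proof (cases "z \<in> set as")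
      case True
      then obtain i' where i': "i' < k" "z = as!i'" using la by (auto simp: in_set_conv_nth)
      then have "i' < i" using z incr_nth_less_iff[OF A i'(1) assms(2)] by auto
      then show ?thesis using i' by auto
    next
      case False
      then have "z \<in> set bs" using z by auto
      then obtain j where j: "j < k" "z = bs!j" using lb by (auto simp: in_set_conv_nth)
      then have "(i,j) \<notin> cmp as bs" using z by (auto simp: cmp_def)
      then show ?thesis using j by auto
    qed
  next
    fix z assume z: "z \<in> nth as ` {..<i} \<union> nth bs ` ?J"
    then show "z \<in> {z \<in> set as \<union> set bs. z < as!i}"
    proof
      assume "z \<in> nth as ` {..<i}"
      then obtain i' where "i' < i" "z = as!i'" by auto
      then show ?thesis using incr_nth[OF A, of i' i] assms(2) la by auto
    next
      assume "z \<in> nth bs ` ?J"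
      then obtain j where j: "j < k" "(i,j) \<notin> cmp as bs" "z = bs!j" by auto
      have "bs!j \<noteq> as!i" using D j(1) assms(2) la lb
        by (metis disjoint_iff nth_mem)
      then have "bs!j < as!i" using j la lb assms(2) by (auto simp: cmp_def)
      then show ?thesis using j lb by auto
    qed
  qed
  have dj: "nth as ` {..<i} \<inter> nth bs ` ?J = {}"
    using D la lb assms(2) by (auto, metis disjoint_iff lessThan_iff less_trans nth_mem)
  have c1: "card (nth as ` {..<i}) = i"
    using card_image[OF inj_on_nth[OF incr_distinct[OF A], of "{..<i}"]] la assms(2) by auto
  have c2: "card (nth bs ` ?J) = card ?J"
    using card_image[OF inj_on_nth[OF incr_distinct[OF B], of ?J]] lb by auto
  show ?thesis unfolding eq
    by (subst card_Un_disjoint) (use dj c1 c2 in auto)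
qed

lemma rank_bs:
  assumes "pairok k as bs" "j < k"
  shows "card {z \<in> set as \<union> set bs. z < bs!j} = card {i. i < k \<and> (i,j) \<in> cmp as bs} + j"
proof -
  have A: "as \<in> incr_tuples UNIV k" and B: "bs \<in> incr_tuples UNIV k" and D: "set as \<inter> set bs = {}"
    using assms by (auto simp: pairok_def)
  have la: "length as = k" and lb: "length bs = k" using A B by (auto simp: incr_tuples_def)
  let ?I = "{i. i < k \<and> (i,j) \<in> cmp as bs}"
  have eq: "{z \<in> set as \<union> set bs. z < bs!j} = nth as ` ?I \<union> nth bs ` {..<j}"
  proof (intro equalityI subsetI)
    fix z assume z: "z \<in> {z \<in> set as \<union> set bs. z < bs!j}"
    show "z \<in> nth as ` ?I \<union> nth bs ` {..<j}"
    proof (cases "z \<in> set bs")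
      case True
      then obtain j' where j': "j' < k" "z = bs!j'" using lb by (auto simp: in_set_conv_nth)
      then have "j' < j" using z incr_nth_less_iff[OF B j'(1) assms(2)] by auto
      then show ?thesis using j' by auto
    next
      case False
      then have "z \<in> set as" using z by auto
      then obtain i where i: "i < k" "z = as!i" using la by (auto simp: in_set_conv_nth)
      then have "(i,j) \<in> cmp as bs" using z la lb assms(2) by (auto simp: cmp_def)
      then show ?thesis using i by auto
    qed
  next
    fix z assume z: "z \<in> nth as ` ?I \<union> nth bs ` {..<j}"
    then show "z \<in> {z \<in> set as \<union> set bs. z < bs!j}"
    proof
      assume "z \<in> nth bs ` {..<j}"
      then obtain j' where "j' < j" "z = bs!j'" by auto
      then show ?thesis using incr_nth[OF B, of j' j] assms(2) lb by auto
    next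
      assume "z \<in> nth as ` ?I"
      then obtain i where i: "i < k" "(i,j) \<in> cmp as bs" "z = as!i" by auto
      then show ?thesis using la by (auto simp: cmp_def)
    qed
  qed
  have dj: "nth as ` ?I \<inter> nth bs ` {..<j} = {}"
    using D la lb assms(2) by (auto, metis disjoint_iff lessThan_iff less_trans nth_mem)
  have c1: "card (nth bs ` {..<j}) = j"
    using card_image[OF inj_on_nth[OF incr_distinct[OF B], of "{..<j}"]] lb assms(2) by auto
  have c2: "card (nth as ` ?I) = card ?I"
    using card_image[OF inj_on_nth[OF incr_distinct[OF A], of ?I]] la by auto
  show ?thesis unfolding eq
    by (subst card_Un_disjoint) (use dj c1 c2 in auto)
qed

lemma pair_unique:
  assumes "pairok k as bs" "pairok k as' bs'" "set as \<union> set bs = set as' \<union> set bs'"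
    "cmp as bs = cmp as' bs'"
  shows "as = as' \<and> bs = bs'"
proof -
  let ?S = "set as \<union> set bs"
  have L: "length as = k" "length bs = k" "length as' = k" "length bs' = k"
    using assms(1,2) by (auto simp: pairok_def incr_tuples_def)
  have "as!i = as'!i" if "i < k" for i
  proof (rule rank_inj[of ?S])
    show "finite ?S" by simp
    show "as!i \<in> ?S" using that L by auto
    show "as'!i \<in> ?S" using that L assms(3) by (metis UnI1 nth_mem)
    show "card {z\<in>?S. z < as!i} = card {z\<in>?S. z < as'!i}"
      using rank_as[OF assms(1) that] rank_as[OF assms(2) that] assms(3,4) by simp
  qed
  moreover have "bs!j = bs'!j" if "j < k" for j
  proof (rule rank_inj[of ?S])
    show "finite ?S" by simp
    show "bs!j \<in> ?S" using that L by auto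
    show "bs'!j \<in> ?S" using that L assms(3) by (metis UnI2 nth_mem)
    show "card {z\<in>?S. z < bs!j} = card {z\<in>?S. z < bs'!j}"
      using rank_bs[OF assms(1) that] rank_bs[OF assms(2) that] assms(3,4) by simp
  qed
  ultimately show ?thesis using L by (auto intro: nth_equalityI)
qed


lemma pairok_map:
  assumes "strict_mono (e::nat\<Rightarrow>nat)" "pairok k as bs"
  shows "pairok k (map e as) (map e bs)" "cmp (map e as) (map e bs) = cmp as bs"
proof -
  have inj: "inj e" using assms(1) strict_mono_imp_inj_on by blast
  have sm: "sorted_wrt (<) (map e xs)" if "sorted_wrt (<) xs" for xs
    using that assms(1) by (simp add: sorted_wrt_map strict_mono_less)
  show "pairok k (map e as) (map e bs)"
    using assms(2) sm by (auto simp: pairok_def incr_tuples_def image_Int[OF inj, symmetric])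
  show "cmp (map e as) (map e bs) = cmp as bs"
    using assms(1) by (auto simp: cmp_def strict_mono_less)
qed

lemma pairok_card:
  assumes "pairok k as bs" shows "card (set as \<union> set bs) = 2*k"
proof -
  have "distinct as" "distinct bs" "length as = k" "length bs = k" "set as \<inter> set bs = {}"
    using assms incr_distinct by (auto simp: pairok_def incr_tuples_def)
  then show ?thesis by (simp add: card_Un_disjoint distinct_card)
qed

lemma ramsey_pairs:
  fixes G :: "nat list \<Rightarrow> nat list \<Rightarrow> bool"
  shows "\<exists>e. strict_mono e \<and> (\<forall>as bs as' bs'. pairok k as bs \<longrightarrow> pairok k as' bs' \<longrightarrow>
           cmp as bs = cmp as' bs' \<longrightarrow> G (map e as) (map e bs) \<longrightarrow> G (map e as') (map e bs'))"
proof -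
  define col where "col S = {P. P \<subseteq> {..<k}\<times>{..<k} \<and>
     (\<exists>as bs. pairok k as bs \<and> set as \<union> set bs = S \<and> cmp as bs = P \<and> G as bs)}" for S
  define U where "U = Pow (Pow ({..<k}\<times>{..<k}))"
  have fU: "finite U" unfolding U_def by simp
  obtain h where h: "bij_betw h U {0..<card U}" using ex_bij_betw_finite_nat[OF fU] by blast
  have colU: "col S \<in> U" for S unfolding col_def U_def by auto
  have "\<exists>Y t. Y \<subseteq> UNIV \<and> infinite Y \<and> t < card U \<and>
     (\<forall>X. X \<subseteq> Y \<and> finite X \<and> card X = 2*k \<longrightarrow> h (col X) = t)"
  proof (rule Ramsey[of "UNIV::nat set" "2*k" "\<lambda>S. h (col S)" "card U"])
    show "infinite (UNIV::nat set)" by simp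
    show "\<forall>X. X \<subseteq> UNIV \<and> finite X \<and> card X = 2 * k \<longrightarrow> h (col X) < card U"
      using bij_betwE[OF h] colU by (meson atLeastLessThan_iff)
  qed
  then obtain Y t where Y: "infinite Y" and hom: "\<And>X. X \<subseteq> Y \<Longrightarrow> finite X \<Longrightarrow> card X = 2*k \<Longrightarrow> h (col X) = t"
    by auto
  have homc: "col X = col X'" if "X \<subseteq> Y" "finite X" "card X = 2*k" "X' \<subseteq> Y" "finite X'" "card X' = 2*k" for X X'
    using inj_onD[OF bij_betw_imp_inj_on[OF h] _ colU colU] hom[OF that(1-3)] hom[OF that(4-6)] by simp
  define e where "e = enumerate Y"
  have sm: "strict_mono e" unfolding e_def using enumerate_mono[OF _ Y] by (simp add: strict_mono_def)
  have eY: "e n \<in> Y" for n unfolding e_def using Y by (rule enumerate_in_set)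
  have claim: "G (map e as') (map e bs')"
    if a: "pairok k as bs" "pairok k as' bs'" "cmp as bs = cmp as' bs'" "G (map e as) (map e bs)"
    for as bs as' bs'
  proof -
    let ?S = "set (map e as) \<union> set (map e bs)" and ?S' = "set (map e as') \<union> set (map e bs')"
    note p1 = pairok_map[OF sm a(1)] and p2 = pairok_map[OF sm a(2)]
    have "cmp as bs \<subseteq> {..<k}\<times>{..<k}" using a(1) by (auto simp: cmp_def pairok_def incr_tuples_def)
    moreover have "\<exists>as0 bs0. pairok k as0 bs0 \<and> set as0 \<union> set bs0 = ?S \<and> cmp as0 bs0 = cmp as bs \<and> G as0 bs0"
      using p1 a(4) by blast
    ultimately have "cmp as bs \<in> col ?S" unfolding col_def by (intro CollectI conjI)
    moreover have "col ?S = col ?S'"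
      by (rule homc) (use eY pairok_card[OF p1(1)] pairok_card[OF p2(1)] in auto)
    ultimately have "cmp as bs \<in> col ?S'" by simp
    then have "\<exists>as'' bs''. pairok k as'' bs'' \<and> set as'' \<union> set bs'' = ?S' \<and> cmp as'' bs'' = cmp as bs \<and> G as'' bs''"
      unfolding col_def by (simp only: mem_Collect_eq)
    then obtain as'' bs'' where b: "pairok k as'' bs''" "set as'' \<union> set bs'' = ?S'"
      "cmp as'' bs'' = cmp as bs" "G as'' bs''" by blast
    have "as'' = map e as' \<and> bs'' = map e bs'"
      by (rule pair_unique[OF b(1) p2(1)]) (use b a(3) p2 in auto)
    then show ?thesis using b by simp
  qed
  show ?thesis using sm claim by blast
qed


lemma slot:
  assumes ab: "pairok k as bs"
    and Q: "qs \<in> incr_tuples UNIV k" and R: "rs \<in> incr_tuples UNIV k"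
    and il: "\<And>i. i < k \<Longrightarrow> qs!i < rs!i"
    and gap: "\<And>i. Suc i < k \<Longrightarrow> rs!i + k < qs!Suc i"
    and g0: "0 < k \<Longrightarrow> k \<le> qs!0"
  shows "\<exists>ls. pairok k qs ls \<and> pairok k rs ls \<and> cmp qs ls = cmp as bs \<and> cmp rs ls = cmp as bs"
proof -
  have A: "as \<in> incr_tuples UNIV k" and B: "bs \<in> incr_tuples UNIV k"
    using ab by (auto simp: pairok_def)
  have la: "length as = k" "length bs = k" "length qs = k" "length rs = k"
    using A B Q R by (auto simp: incr_tuples_def)
  define a where "a j = (LEAST i. i = k \<or> \<not> as!i < bs!j)" for j
  have a_le: "a j \<le> k" for j unfolding a_def by (rule Least_le) simp
  have a1: "as!i < bs!j" if "i < a j" for i j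
    using not_less_Least[OF that[unfolded a_def]] by simp
  have a2: "\<not> as!i < bs!j" if "a j \<le> i" "i < k" for i j
  proof -
    have "a j = k \<or> \<not> as!(a j) < bs!j" unfolding a_def by (rule LeastI[of _ k]) simp
    then have "\<not> as!(a j) < bs!j" using that by auto
    moreover have "as!(a j) \<le> as!i" using incr_nth_le[OF A that] .
    ultimately show ?thesis by simp
  qed
  have aiff: "as!i < bs!j \<longleftrightarrow> i < a j" if "i < k" for i j
    using a1 a2 that by (meson not_less)
  have amono: "a j \<le> a j'" if "j < j'" "j' < k" for j j'
  proof (rule ccontr)
    assume "\<not> a j \<le> a j'"
    then have lt: "a j' < a j" by simp
    then have "a j' < k" using a_le[of j] by simp
    have "as!(a j') < bs!j" using a1[OF lt] .
    also have "bs!j < bs!j'" using incr_nth[OF B that] .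
    finally show False using a2[of j' "a j'"] \<open>a j' < k\<close> by simp
  qed
  define base where "base x = (if x = 0 then 0 else rs!(x - 1) + 1)" for x
  define ls where "ls = map (\<lambda>j. base (a j) + j) [0..<k]"
  have lsl: "length ls = k" unfolding ls_def by simp
  have lsn: "ls!j = base (a j) + j" if "j < k" for j unfolding ls_def using that by simp
  have B1: "rs!i < ls!j" if "i < k" "j < k" "i < a j" for i j
  proof -
    have "a j \<noteq> 0" "a j - 1 < k" using that a_le[of j] by auto
    have "rs!i \<le> rs!(a j - 1)" using incr_nth_le[OF R, of i "a j - 1"] that \<open>a j - 1 < k\<close> by simp
    then show ?thesis using lsn[OF that(2)] \<open>a j \<noteq> 0\<close> unfolding base_def by simp
  qed
  have B1': "qs!i < ls!j" if "i < k" "j < k" "i < a j" for i j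
    using B1[OF that] il[OF that(1)] by simp
  have B2: "ls!j < qs!i" if "i < k" "j < k" "a j \<le> i" for i j
  proof (cases "a j = 0")
    case True
    have "qs!0 \<le> qs!i" using incr_nth_le[OF Q, of 0 i] that by simp
    then show ?thesis using True lsn[OF that(2)] g0 that unfolding base_def by simp
  next
    case False
    then have ak: "a j < k" using that by simp
    have "rs!(a j - 1) + k < qs!(a j)" using gap[of "a j - 1"] False ak by simp
    moreover have "qs!(a j) \<le> qs!i" using incr_nth_le[OF Q, of "a j" i] that by simp
    ultimately show ?thesis using False lsn[OF that(2)] that unfolding base_def by simp
  qed
  have B2': "ls!j < rs!i" if "i < k" "j < k" "a j \<le> i" for i j
    using B2[OF that] il[OF that(1)] by simp
  have lsinc: "ls!j < ls!j'" if "j < j'" "j' < k" for j j'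
  proof (cases "a j = a j'")
    case True
    then show ?thesis using lsn that by simp
  next
    case False
    then have lt: "a j < a j'" using amono[OF that] by simp
    then have ak: "a j < k" using a_le[of j'] by simp
    have "ls!j < qs!(a j)" using B2[OF ak _ order_refl] that by simp
    also have "\<dots> < rs!(a j)" using il[OF ak] .
    also have "\<dots> < ls!j'" using B1[OF ak that(2) lt] .
    finally show ?thesis .
  qed
  have L: "ls \<in> incr_tuples UNIV k"
    unfolding incr_tuples_def using lsl lsinc by (auto simp: sorted_wrt_iff_nth_less)
  have qiff: "qs!i < ls!j \<longleftrightarrow> i < a j" if "i < k" "j < k" for i j
    using B1'[OF that] B2[OF that] by (meson not_less order.asym)
  have riff: "rs!i < ls!j \<longleftrightarrow> i < a j" if "i < k" "j < k" for i j
    using B1[OF that] B2'[OF that] by (meson not_less order.asym)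
  have dq: "set qs \<inter> set ls = {}"
  proof -
    have "qs!i \<noteq> ls!j \<and> ls!j \<noteq> qs!i" if "i < k" "j < k" for i j
      using B1'[OF that] B2[OF that] by (metis not_less order.irrefl)
    then show ?thesis using la lsl by (auto simp: in_set_conv_nth)
  qed
  have dr: "set rs \<inter> set ls = {}"
  proof -
    have "rs!i \<noteq> ls!j \<and> ls!j \<noteq> rs!i" if "i < k" "j < k" for i j
      using B1[OF that] B2'[OF that] by (metis not_less order.irrefl)
    then show ?thesis using la lsl by (auto simp: in_set_conv_nth)
  qed
  have c1: "cmp qs ls = cmp as bs"
    unfolding cmp_def using la lsl qiff aiff by auto
  have c2: "cmp rs ls = cmp as bs"
    unfolding cmp_def using la lsl riff aiff by auto
  show ?thesis using Q R L dq dr c1 c2 unfolding pairok_def by blast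
qed


lemma incr_map:
  assumes "strict_mono (e::nat\<Rightarrow>nat)" "xs \<in> incr_tuples N k"
  shows "map e xs \<in> incr_tuples UNIV k"
  using assms by (simp add: incr_tuples_def sorted_wrt_map strict_mono_less)

lemma Hpairs_map:
  assumes "strict_mono (e::nat\<Rightarrow>nat)" "(xs, ys) \<in> Hpairs UNIV k j" "j < k"
  shows "(map e xs, map e ys) \<in> Hpairs UNIV k j"
  using assms incr_map[OF assms(1)] by (auto simp: Hpairs_def incr_tuples_def strict_mono_less)

lemma Hpairs_nonempty:
  assumes "j < k" shows "Hpairs UNIV k j \<noteq> {}"
proof -
  define xs where "xs = map (\<lambda>i. 2*i) [0..<k]"
  define ys where "ys = map (\<lambda>i. if i = j then 2*i+1 else 2*i) [0..<k]"
  have "xs \<in> incr_tuples UNIV k" unfolding xs_def incr_tuples_def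
    by (auto simp: sorted_wrt_iff_nth_less)
  moreover have "ys \<in> incr_tuples UNIV k" unfolding ys_def incr_tuples_def
    by (auto simp: sorted_wrt_iff_nth_less)
  moreover have "(\<forall>i<k. i \<noteq> j \<longrightarrow> xs ! i = ys ! i) \<and> xs ! j < ys ! j"
    unfolding xs_def ys_def using assms by simp
  ultimately have "(xs, ys) \<in> Hpairs UNIV k j" unfolding Hpairs_def by blast
  then show ?thesis by blast
qed

lemma hamming_le: "length xs = k \<Longrightarrow> hamming xs ys \<le> k"
  unfolding hamming_def by (rule order.trans[OF card_mono[of "{..<k}"]]) auto

lemma lip_bound:
  assumes "hamming_lipschitz M d k f"
  shows "\<exists>B. \<forall>xs\<in>incr_tuples UNIV k. \<forall>ys\<in>incr_tuples UNIV k. d (f xs) (f ys) \<le> B"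
proof -
  obtain C where C: "\<And>xs ys. xs\<in>incr_tuples UNIV k \<Longrightarrow> ys\<in>incr_tuples UNIV k \<Longrightarrow>
      d (f xs) (f ys) \<le> C * real (hamming xs ys)"
    using assms unfolding hamming_lipschitz_def by blast
  have "d (f xs) (f ys) \<le> \<bar>C\<bar> * real k" if "xs\<in>incr_tuples UNIV k" "ys\<in>incr_tuples UNIV k" for xs ys
  proof -
    have h: "real (hamming xs ys) \<le> real k" using hamming_le[of xs k ys] that by (simp add: incr_tuples_def)
    have "C * real (hamming xs ys) \<le> \<bar>C\<bar> * real (hamming xs ys)" by (simp add: mult_right_mono)
    also have "\<dots> \<le> \<bar>C\<bar> * real k" using h by (simp add: mult_left_mono)
    finally show ?thesis using C[OF that] by simp
  qed
  then show ?thesis by blast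
qed

lemma alpha_bdd:
  assumes "hamming_lipschitz M d k f"
  shows "bdd_above ((\<lambda>(xs, ys). d (f xs) (f ys)) ` Hpairs UNIV k j)"
proof -
  obtain B where B: "\<forall>xs\<in>incr_tuples UNIV k. \<forall>ys\<in>incr_tuples UNIV k. d (f xs) (f ys) \<le> B"
    using lip_bound[OF assms] by blast
  show ?thesis unfolding bdd_above_def
    by (rule exI[of _ B]) (use B in \<open>auto simp: Hpairs_def\<close>)
qed

lemma hamming_map:
  assumes "inj (e::nat\<Rightarrow>nat)" "length xs = length ys"
  shows "hamming (map e xs) (map e ys) = hamming xs ys"
  unfolding hamming_def
  by (rule arg_cong[where f=card], rule Collect_cong) (use assms in \<open>auto simp: inj_eq\<close>)

lemma lip_map:
  assumes "strict_mono (e::nat\<Rightarrow>nat)" "hamming_lipschitz M d k f"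
  shows "hamming_lipschitz M d k (\<lambda>xs. f (map e xs))"
proof -
  have inj: "inj e" using assms(1) strict_mono_imp_inj_on by blast
  obtain C where C: "\<forall>xs\<in>incr_tuples UNIV k. \<forall>ys\<in>incr_tuples UNIV k.
      d (f xs) (f ys) \<le> C * real (hamming xs ys)" and im: "f ` incr_tuples UNIV k \<subseteq> M"
    using assms(2) unfolding hamming_lipschitz_def by blast
  have "(\<lambda>xs. f (map e xs)) ` incr_tuples UNIV k \<subseteq> M"
    using im incr_map[OF assms(1)] by blast
  moreover have "d (f (map e xs)) (f (map e ys)) \<le> C * real (hamming xs ys)"
    if "xs\<in>incr_tuples UNIV k" "ys\<in>incr_tuples UNIV k" for xs ys
  proof -
    have "d (f (map e xs)) (f (map e ys)) \<le> C * real (hamming (map e xs) (map e ys))"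
      using C incr_map[OF assms(1) that(1)] incr_map[OF assms(1) that(2)] by blast
    then show ?thesis using hamming_map[OF inj, of xs ys] that by (simp add: incr_tuples_def)
  qed
  ultimately show ?thesis unfolding hamming_lipschitz_def by blast
qed

lemma alpha_mono:
  assumes "Metric_space M d" "strict_mono (e::nat\<Rightarrow>nat)" "hamming_lipschitz M d k f" "j < k"
  shows "0 \<le> alpha_coef d k (\<lambda>xs. f (map e xs)) j"
    "alpha_coef d k (\<lambda>xs. f (map e xs)) j \<le> alpha_coef d k f j"
proof -
  have bf: "bdd_above ((\<lambda>(xs, ys). d (f xs) (f ys)) ` Hpairs UNIV k j)" by (rule alpha_bdd[OF assms(3)])
  have bg: "bdd_above ((\<lambda>(xs, ys). d (f (map e xs)) (f (map e ys))) ` Hpairs UNIV k j)"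
    by (rule alpha_bdd[OF lip_map[OF assms(2,3)]])
  obtain pr where pr: "pr \<in> Hpairs UNIV k j" using Hpairs_nonempty[OF assms(4)] by blast
  show "0 \<le> alpha_coef d k (\<lambda>xs. f (map e xs)) j"
    unfolding alpha_coef_def
    by (rule cSUP_upper2[OF bg pr]) (use Metric_space.nonneg[OF assms(1)] in \<open>auto split: prod.splits\<close>)
  show "alpha_coef d k (\<lambda>xs. f (map e xs)) j \<le> alpha_coef d k f j"
    unfolding alpha_coef_def
  proof (rule cSUP_mono[OF Hpairs_nonempty[OF assms(4)] bf])
    fix n assume n: "n \<in> Hpairs UNIV k j"
    obtain xs ys where "n = (xs, ys)" by (cases n)
    then show "\<exists>m\<in>Hpairs UNIV k j. (case n of (xs, ys) \<Rightarrow> d (f (map e xs)) (f (map e ys)))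
        \<le> (case m of (xs, ys) \<Rightarrow> d (f xs) (f ys))"
      using Hpairs_map[OF assms(2) _ assms(4)] n by (intro bexI[of _ "(map e xs, map e ys)"]) auto
  qed
qed

lemma alpha_norm_mono:
  assumes "Metric_space M d" "strict_mono (e::nat\<Rightarrow>nat)" "hamming_lipschitz M d k f" "0 < p"
  shows "alpha_norm p d k (\<lambda>xs. f (map e xs)) \<le> alpha_norm p d k f"
proof -
  have "(\<Sum>j<k. alpha_coef d k (\<lambda>xs. f (map e xs)) j powr p) \<le> (\<Sum>j<k. alpha_coef d k f j powr p)"
    by (rule sum_mono, rule powr_mono2) (use alpha_mono[OF assms(1-3)] assms(4) in auto)
  then show ?thesis unfolding alpha_norm_def
    by (intro powr_mono2) (use assms(4) in \<open>auto intro: sum_nonneg\<close>)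
qed


lemma HIC_imp_HC:
  assumes "lambda_HIC lam p M d"
  shows "lambda_HC lam p M d"
  unfolding lambda_HC_def
proof (intro allI impI)
  fix k f assume lf: "hamming_lipschitz M d k f"
  obtain N where N: "infinite N"
    and H: "\<forall>(xs, ys) \<in> interlaced N k. d (f xs) (f ys) \<le> lam * alpha_norm p d k f"
    using assms lf unfolding lambda_HIC_def by blast
  define e where "e = enumerate N"
  have sm: "strict_mono e" unfolding e_def using enumerate_mono[OF _ N] by (simp add: strict_mono_def)
  have eN: "e n \<in> N" for n unfolding e_def using N by (rule enumerate_in_set)
  define xs where "xs = map (\<lambda>i. e (2*i)) [0..<k]"
  define ys where "ys = map (\<lambda>i. e (2*i+1)) [0..<k]"
  have X: "xs \<in> incr_tuples N k" unfolding xs_def incr_tuples_def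
    using sm eN by (auto simp: sorted_wrt_iff_nth_less strict_mono_less)
  have Y: "ys \<in> incr_tuples N k" unfolding ys_def incr_tuples_def
    using sm eN by (auto simp: sorted_wrt_iff_nth_less strict_mono_less)
  have "(xs, ys) \<in> interlaced N k" unfolding interlaced_def
    using X Y sm by (auto simp: xs_def ys_def strict_mono_less)
  then have bd: "d (f xs) (f ys) \<le> lam * alpha_norm p d k f" using H by blast
  have dj: "set xs \<inter> set ys = {}"
  proof -
    have "e (2*i) \<noteq> e (2*j+1)" for i j
      using strict_mono_imp_inj_on[OF sm] by (auto simp: inj_eq) presburger
    then show ?thesis unfolding xs_def ys_def by auto
  qed
  have "xs \<in> incr_tuples UNIV k" "ys \<in> incr_tuples UNIV k" using X Y by (auto simp: incr_tuples_def)
  then show "\<exists>xs \<in> incr_tuples UNIV k. \<exists>ys \<in> incr_tuples UNIV k.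
           set xs \<inter> set ys = {} \<and> d (f xs) (f ys) \<le> lam * alpha_norm p d k f"
    using dj bd by blast
qed

lemma Qgap:
  fixes k s t :: nat
  assumes "(k+1)*(s+1) < (k+1)*(t+1)"
  shows "(k+1)*(s+1) + k < (k+1)*(t+1)"
proof -
  have "s + 1 < t + 1" using assms mult_less_cancel1[of "k+1" "s+1" "t+1"] by blast
  then have "s < t" by simp
  then have "(k+1)*(s+2) \<le> (k+1)*(t+1)" by (intro mult_le_mono2) simp
  then show ?thesis by simp
qed

lemma pullback:
  assumes "strict_mono (e::nat\<Rightarrow>nat)" "xs \<in> incr_tuples (e ` S) k"
  shows "\<exists>qs. qs \<in> incr_tuples S k \<and> xs = map e qs"
proof -
  have inj: "inj e" using assms(1) strict_mono_imp_inj_on by blast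
  define qs where "qs = map (inv e) xs"
  have xs: "xs \<in> incr_tuples UNIV k" "set xs \<subseteq> e ` S" using assms(2) by (auto simp: incr_tuples_def)
  have eq: "map e qs = xs" unfolding qs_def map_map
    by (rule map_idI) (use xs(2) in \<open>auto simp: f_inv_into_f\<close>)
  have QS: "set qs \<subseteq> S" unfolding qs_def using xs(2) inv_f_f[OF inj] by auto
  have sorted: "sorted_wrt (<) qs"
  proof -
    have "sorted_wrt (<) (map e qs)" using eq xs(1) by (simp add: incr_tuples_def)
    then show ?thesis using assms(1) by (simp add: sorted_wrt_map strict_mono_less)
  qed
  have "length qs = k" using xs(1) by (simp add: qs_def incr_tuples_def)
  then show ?thesis using QS sorted eq unfolding incr_tuples_def by auto
qed

lemma HC_imp_HIC:
  assumes ms: "Metric_space M d" and p: "0 < p" and lam0: "0 < lam" and hc: "lambda_HC lam p M d"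
  shows "lambda_HIC (2*lam) p M d"
  unfolding lambda_HIC_def
proof (intro allI impI)
  fix k f assume lf: "hamming_lipschitz M d k f"
  define c where "c = lam * alpha_norm p d k f"
  define G where "G xs ys = (d (f xs) (f ys) \<le> c)" for xs ys
  obtain e where sm: "strict_mono e" and R: "\<And>as bs as' bs'. pairok k as bs \<Longrightarrow> pairok k as' bs' \<Longrightarrow>
           cmp as bs = cmp as' bs' \<Longrightarrow> G (map e as) (map e bs) \<Longrightarrow> G (map e as') (map e bs')"
    using ramsey_pairs[of k G] by blast
  have inj: "inj e" using sm strict_mono_imp_inj_on by blast
  obtain as0 bs0 where ab: "as0 \<in> incr_tuples UNIV k" "bs0 \<in> incr_tuples UNIV k" "set as0 \<inter> set bs0 = {}"
    and bd0: "d (f (map e as0)) (f (map e bs0)) \<le> lam * alpha_norm p d k (\<lambda>xs. f (map e xs))"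
    using hc lip_map[OF sm lf] unfolding lambda_HC_def by blast
  have "lam * alpha_norm p d k (\<lambda>xs. f (map e xs)) \<le> c"
    unfolding c_def using alpha_norm_mono[OF ms sm lf p] lam0 by (simp add: mult_left_mono)
  then have G0: "G (map e as0) (map e bs0)" unfolding G_def using bd0 by simp
  have pab: "pairok k as0 bs0" using ab by (simp add: pairok_def)
  define Qs where "Qs = range (\<lambda>t::nat. (k+1)*(t+1))"
  have infQ: "infinite Qs" unfolding Qs_def proof (rule range_inj_infinite, rule inj_onI)
    fix x y :: nat assume "(k+1)*(x+1) = (k+1)*(y+1)"
    then have "x + 1 = y + 1" using mult_left_cancel[of "k+1" "x+1" "y+1"] by simp
    then show "x = y" by simp
  qed
  have infN: "infinite (e ` Qs)" using infQ inj by (simp add: finite_image_iff inj_on_subset)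
  have fM: "f xs \<in> M" if "xs \<in> incr_tuples UNIV k" for xs
    using lf that unfolding hamming_lipschitz_def by blast
  have "\<forall>(xs, ys) \<in> interlaced (e ` Qs) k. d (f xs) (f ys) \<le> 2 * lam * alpha_norm p d k f"
  proof (clarify)
    fix xs ys assume I: "(xs, ys) \<in> interlaced (e ` Qs) k"
    then have X: "xs \<in> incr_tuples (e ` Qs) k" and Y: "ys \<in> incr_tuples (e ` Qs) k"
      and il: "\<And>i. i < k \<Longrightarrow> xs!i < ys!i \<and> (Suc i < k \<longrightarrow> ys!i < xs!Suc i)"
      unfolding interlaced_def by auto
    obtain qs where q: "qs \<in> incr_tuples Qs k" "xs = map e qs" using pullback[OF sm X] by blast
    obtain rs where r: "rs \<in> incr_tuples Qs k" "ys = map e rs" using pullback[OF sm Y] by blast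
    have lq: "length qs = k" "length rs = k" using q r by (auto simp: incr_tuples_def)
    have inQ: "qs!i \<in> Qs" "rs!i \<in> Qs" if "i < k" for i
      using q r lq that by (auto simp: incr_tuples_def)
    have Q': "qs \<in> incr_tuples UNIV k" "rs \<in> incr_tuples UNIV k" using q r by (auto simp: incr_tuples_def)
    have il1: "qs!i < rs!i" if "i < k" for i
      using il[OF that] q r lq that sm by (simp add: strict_mono_less)
    have gap: "rs!i + k < qs!Suc i" if si: "Suc i < k" for i
    proof -
      have "ys!i < xs!Suc i" using il[of i] that by simp
      then have lt: "rs!i < qs!Suc i" using q r lq that sm by (simp add: strict_mono_less)
      have ik: "i < k" using that by simp
      obtain s where s: "rs!i = (k+1)*(s+1)" using inQ(2)[OF ik] unfolding Qs_def by auto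
      obtain t where t: "qs!Suc i = (k+1)*(t+1)" using inQ(1)[OF si] unfolding Qs_def by auto
      show ?thesis using Qgap[of k s t] lt s t by simp
    qed
    have g0: "k \<le> qs!0" if k0: "0 < k"
    proof -
      obtain t where t: "qs!0 = (k+1)*(t+1)" using inQ(1)[OF k0] unfolding Qs_def by auto
      then show ?thesis by simp
    qed
    obtain ls where ls: "pairok k qs ls" "pairok k rs ls" "cmp qs ls = cmp as0 bs0" "cmp rs ls = cmp as0 bs0"
      using slot[OF pab Q' il1 gap g0] by blast
    have G1: "G (map e qs) (map e ls)" using R[OF pab ls(1) ls(3)[symmetric] G0] .
    have G2: "G (map e rs) (map e ls)" using R[OF pab ls(2) ls(4)[symmetric] G0] .
    have L: "map e ls \<in> incr_tuples UNIV k" using pairok_map(1)[OF sm ls(1)] by (simp add: pairok_def)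
    have "d (f xs) (f ys) \<le> d (f xs) (f (map e ls)) + d (f (map e ls)) (f ys)"
      by (rule Metric_space.triangle[OF ms]) (use fM Q' L q r incr_map[OF sm] in auto)
    also have "\<dots> = d (f xs) (f (map e ls)) + d (f ys) (f (map e ls))"
      using Metric_space.commute[OF ms] by simp
    also have "\<dots> \<le> c + c" using G1 G2 q r unfolding G_def by simp
    finally show "d (f xs) (f ys) \<le> 2 * lam * alpha_norm p d k f" unfolding c_def by simp
  qed
  then show "\<exists>N. infinite N \<and> (\<forall>(xs, ys) \<in> interlaced N k. d (f xs) (f ys) \<le> 2 * lam * alpha_norm p d k f)"
    using infN by blast
qed

theorem mainTheorem4:
  fixes M :: "'a set" and d :: "'a \<Rightarrow> 'a \<Rightarrow> real" and p :: real
  assumes "Metric_space M d" and "1 < p"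
  shows "HC p M d \<longleftrightarrow> HIC p M d"
proof
  assume "HC p M d"
  then obtain lam where "lam > 0" "lambda_HC lam p M d" unfolding HC_def by blast
  then have "lambda_HIC (2*lam) p M d" using HC_imp_HIC[OF assms(1)] assms(2) by simp
  then show "HIC p M d" unfolding HIC_def using \<open>lam > 0\<close> by (intro exI[of _ "2*lam"]) simp
next
  assume "HIC p M d"
  then obtain lam where "lam > 0" "lambda_HIC lam p M d" unfolding HIC_def by blast
  then show "HC p M d" unfolding HC_def using HIC_imp_HC by blast
qed

end
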